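(* Let $f$ be a complex polynomial of degree $d$ with $f(0)\neq0$, with roots $\zeta_1,\dots,\zeta_d$ (with multiplicity) ordered so that $|\zeta_1|\le\cdots\le|\zeta_d|$, not all of the same modulus. Let $\rho=\min\{|\zeta_{i+1}|/|\zeta_i|:|\zeta_{i+1}|>|\zeta_i|\}$, $I=\{i:1\le i\le d-1,\ |\zeta_i|<|\zeta_{i+1}|\}\cup\{0,d\}$, $N\ge 0$, $R=\rho^{2^N}$, $g=G^Nf=\sum_i g_ix^i$, $r_i=-2^{-N}\log|g_i|$, and for $0\le a<b\le d$ put $S(a,b)=\frac{r_b-r_a}{b-a}$. Assume: (a) $m\ge i_2-i_1$ for all successive elements $i_1<i_2$ of $I$; (b) $2^{-N+1}\log(2^m+2^dR^{-1})-2^{-N+2}\log(1-2^dR^{-1})<E<\frac{\log\rho}{2}$; (c) $0\le i<j<k\le d$. Then: 1. If $i$ and $j$ are successive elements of $I$ and no element of $I$ lies strictly between $j$ and $k$, then $S(i,j)<S(j,k)-E$. 2. If $i$ and $k$ are successive elements of $I$, then $S(i,j)>S(j,k)-E$.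
   Context: $\log$ is the natural logarithm. The Graeffe operator maps a degree $d$ polynomial $f$ to $Gf(x)=(-1)^d f(\sqrt{x})f(-\sqrt{x})$, again of degree $d$; $G^N$ is its $N$-th iterate. Two elements $i_1<i_2$ of $I$ are successive if no element of $I$ lies strictly between them. Hypothesis (b) implicitly requires $2^dR^{-1}<1$. *)

theory Defs
  imports "HOL-Analysis.Analysis" "HOL-Computational_Algebra.Polynomial" "HOL-Library.Extended_Real"
begin

definition graeffe :: "complex poly \<Rightarrow> complex poly" where
  "graeffe f = (THE g. \<forall>y. poly g (y^2) = (-1) ^ degree f * poly f y * poly f (- y))"

text \<open>r_i = -2^(-N) log |g_i|, with the convention log 0 = -infinity (so r_i = +infinity if g_i = 0).\<close>
definition graeffe_r :: "complex poly \<Rightarrow> nat \<Rightarrow> nat \<Rightarrow> ereal" where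
  "graeffe_r f N i = (let c = coeff ((graeffe ^^ N) f) i in
     if c = 0 then \<infinity> else ereal (- ln (norm c) / 2 ^ N))"

definition graeffe_S :: "complex poly \<Rightarrow> nat \<Rightarrow> nat \<Rightarrow> nat \<Rightarrow> ereal" where
  "graeffe_S f N a b = (graeffe_r f N b - graeffe_r f N a) / ereal (real b - real a)"

definition successive :: "nat set \<Rightarrow> nat \<Rightarrow> nat \<Rightarrow> bool" where
  "successive I i1 i2 \<longleftrightarrow> i1 \<in> I \<and> i2 \<in> I \<and> i1 < i2 \<and> (\<forall>x\<in>I. \<not> (i1 < x \<and> x < i2))"

end

theory Submission
  imports Defs
begin

lemma coeff_prod_linear:
  fixes w :: "nat \<Rightarrow> complex"
  assumes "finite A"
  shows "coeff (\<Prod>l\<in>A. [:- w l, 1:]) j = (\<Sum>S\<in>{S\<in>Pow A. card S = j}. \<Prod>l\<in>A-S. - w l)"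
proof -
  have e: "[:- w l, 1:] = monom 1 1 + [:- w l:]" for l
    by (simp add: monom_altdef)
  have "(\<Prod>l\<in>A. [:- w l, 1:]) = (\<Prod>l\<in>A. monom 1 1 + [:- w l:])"
    by (simp add: e)
  also have "\<dots> = (\<Sum>X\<in>Pow A. (\<Prod>l\<in>X. monom 1 1) * (\<Prod>l\<in>A-X. [:- w l:]))"
    by (rule prod_add[OF assms])
  also have "\<dots> = (\<Sum>X\<in>Pow A. monom (\<Prod>l\<in>A-X. - w l) (card X))"
    by (intro sum.cong refl) (simp add: prod_to_poly monom_power smult_monom flip: smult_monom[of _ 1] )
  finally have "coeff (\<Prod>l\<in>A. [:- w l, 1:]) j = (\<Sum>X\<in>Pow A. if card X = j then (\<Prod>l\<in>A-X. - w l) else 0)"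
    by (simp add: coeff_sum)
  also have "\<dots> = (\<Sum>S\<in>{S\<in>Pow A. card S = j}. \<Prod>l\<in>A-S. - w l)"
    by (simp add: sum.inter_filter[symmetric] assms)
  finally show ?thesis .
qed

lemma degree_linear_prod:
  fixes z :: "nat \<Rightarrow> complex"
  assumes "c \<noteq> 0"
  shows "degree (smult c (\<Prod>l\<in>{1..d}. [:- z l, 1:])) = d"
proof -
  have "degree (\<Prod>l\<in>{1..d}. [:- z l, 1:]) = (\<Sum>l\<in>{1..d}. degree [:- z l, 1:])"
    by (rule degree_prod_eq_sum_degree) auto
  then show ?thesis using assms by simp
qed

lemma graeffe_linear:
  fixes z :: "nat \<Rightarrow> complex"
  assumes c: "c \<noteq> 0" and f: "f = smult c (\<Prod>l\<in>{1..d}. [:- z l, 1:])"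
  shows "graeffe f = smult (c^2) (\<Prod>l\<in>{1..d}. [:- ((z l)^2), 1:])"
proof -
  define g where "g = smult (c^2) (\<Prod>l\<in>{1..d}. [:- ((z l)^2), 1:])"
  have deg: "degree f = d" using degree_linear_prod[OF c] f by simp
  have P: "poly g (y^2) = (-1) ^ degree f * poly f y * poly f (- y)" for y
  proof -
    have "(-1) ^ degree f * poly f y * poly f (- y) = (-1) ^ d * poly f y * poly f (- y)"
      by (simp add: deg)
    also have "\<dots> = c^2 * ((\<Prod>l\<in>{1..d}. (y - z l)) * ((\<Prod>l\<in>{1..d}. (-1)) * (\<Prod>l\<in>{1..d}. (- y - z l))))"
      by (simp add: f poly_prod power2_eq_square algebra_simps)
    also have "\<dots> = c^2 * ((\<Prod>l\<in>{1..d}. (y - z l)) * (\<Prod>l\<in>{1..d}. (-1) * (- y - z l)))"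
      by (simp only: prod.distrib)
    also have "\<dots> = c^2 * (\<Prod>l\<in>{1..d}. (y - z l) * ((-1) * (- y - z l)))"
      by (simp add: prod.distrib)
    also have "\<dots> = c^2 * (\<Prod>l\<in>{1..d}. y^2 - (z l)^2)"
      by (intro arg_cong[where f="\<lambda>x. c^2 * x"] prod.cong refl) (simp add: algebra_simps power2_eq_square)
    also have "\<dots> = poly g (y^2)"
      by (simp add: g_def poly_prod)
    finally show ?thesis by simp
  qed
  have "graeffe f = g"
    unfolding graeffe_def
  proof (rule the_equality)
    show "\<forall>y. poly g (y\<^sup>2) = (- 1) ^ degree f * poly f y * poly f (- y)" using P by blast
  next
    fix h assume h: "\<forall>y. poly h (y\<^sup>2) = (- 1) ^ degree f * poly f y * poly f (- y)"
    have "poly h x = poly g x" for x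
    proof -
      have "poly h ((csqrt x)^2) = poly g ((csqrt x)^2)" by (simp only: h P)
      then show ?thesis by (simp only: power2_csqrt)
    qed
    then show "h = g" using poly_eq_poly_eq_iff by blast
  qed
  then show ?thesis by (simp add: g_def)
qed

lemma graeffe_iter:
  fixes z :: "nat \<Rightarrow> complex"
  assumes c: "c \<noteq> 0" and f: "f = smult c (\<Prod>l\<in>{1..d}. [:- z l, 1:])"
  shows "(graeffe ^^ N) f = smult (c^(2^N)) (\<Prod>l\<in>{1..d}. [:- ((z l)^(2^N)), 1:])"
proof (induction N)
  case 0
  then show ?case using f by simp
next
  case (Suc N)
  have "(graeffe ^^ Suc N) f = graeffe ((graeffe ^^ N) f)" by simp
  also have "\<dots> = smult ((c^(2^N))^2) (\<Prod>l\<in>{1..d}. [:- (((z l)^(2^N))^2), 1:])"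
    by (rule graeffe_linear[OF _ Suc.IH]) (use c in simp)
  also have "\<dots> = smult (c^(2^Suc N)) (\<Prod>l\<in>{1..d}. [:- ((z l)^(2^Suc N)), 1:])"
    by (simp add: power_mult[symmetric] mult.commute)
  finally show ?case .
qed

lemma sum_decomp:
  fixes \<mu> :: "nat \<Rightarrow> real"
  assumes S: "S \<subseteq> {1..d}" "card S = j" "j \<le> d"
  shows "(\<Sum>l\<in>{1..d}-S. \<mu> l) = (\<Sum>l\<in>{1..d}-{1..j}. \<mu> l) - (\<Sum>l\<in>S\<inter>{Suc j..d}. \<mu> l) + (\<Sum>l\<in>{1..j}-S. \<mu> l)"
    and "card ({1..j}-S) = card (S\<inter>{Suc j..d})"
proof -
  have fS: "finite S" using S finite_subset by blast
  have A1: "{1..d}-S = (({1..d}-{1..j}) - (S\<inter>{Suc j..d})) \<union> ({1..j}-S)" using S by auto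
  have "(\<Sum>l\<in>{1..d}-S. \<mu> l) = (\<Sum>l\<in>({1..d}-{1..j}) - (S\<inter>{Suc j..d}). \<mu> l) + (\<Sum>l\<in>{1..j}-S. \<mu> l)"
    unfolding A1 by (rule sum.union_disjoint) auto
  also have "(\<Sum>l\<in>({1..d}-{1..j}) - (S\<inter>{Suc j..d}). \<mu> l) = (\<Sum>l\<in>{1..d}-{1..j}. \<mu> l) - (\<Sum>l\<in>S\<inter>{Suc j..d}. \<mu> l)"
    by (rule sum_diff) auto
  finally show "(\<Sum>l\<in>{1..d}-S. \<mu> l) = (\<Sum>l\<in>{1..d}-{1..j}. \<mu> l) - (\<Sum>l\<in>S\<inter>{Suc j..d}. \<mu> l) + (\<Sum>l\<in>{1..j}-S. \<mu> l)" .
  have "S = (S \<inter> {1..j}) \<union> (S\<inter>{Suc j..d})" using S by auto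
  moreover have "card ((S\<inter>{1..j}) \<union> (S\<inter>{Suc j..d})) = card (S\<inter>{1..j}) + card (S\<inter>{Suc j..d})"
    by (rule card_Un_disjoint) (use fS in auto)
  ultimately have "card S = card (S \<inter> {1..j}) + card (S\<inter>{Suc j..d})" by simp
  moreover have "card ({1..j}-S) = j - card (S \<inter> {1..j})"
    by (metis card_Diff_subset_Int card_atLeastAtMost diff_Suc_1 finite_Int fS inf_commute finite_atLeastAtMost)
  ultimately show "card ({1..j}-S) = card (S\<inter>{Suc j..d})" using S by linarith
qed

lemma sum_le_one_term:
  fixes h :: "nat \<Rightarrow> real"
  assumes "finite X" "\<forall>l\<in>X. h l \<le> 0" "x \<in> X"
  shows "sum h X \<le> h x"
proof -
  have "sum h X = h x + sum h (X - {x})" using assms by (simp add: sum.remove)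
  moreover have "sum h (X - {x}) \<le> 0" using assms by (intro sum_nonpos) auto
  ultimately show ?thesis by linarith
qed

lemma block_bound:
  fixes \<mu> :: "nat \<Rightarrow> real"
  assumes S: "S \<subseteq> {1..d}" "card S = j" and ord: "i' \<le> j" "j \<le> k'" "k' \<le> d"
    and G: "G \<ge> 0"
    and H1: "\<forall>l\<in>{1..j}. \<mu> l \<le> c"
    and H2: "\<forall>l\<in>{Suc j..d}. \<mu> l \<ge> c"
    and H3: "\<forall>l\<in>{1..i'}. \<mu> l \<le> c - G"
    and H4: "\<forall>l\<in>{Suc k'..d}. \<mu> l \<ge> c + G"
  shows "(\<Sum>l\<in>{1..d}-S. \<mu> l) \<le> (\<Sum>l\<in>{1..d}-{1..j}. \<mu> l) - (if {1..i'} \<subseteq> S \<and> S \<inter> {Suc k'..d} = {} then 0 else G)"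
proof -
  define X where "X = {1..j}-S"
  define Y where "Y = S\<inter>{Suc j..d}"
  have jd: "j \<le> d" using ord by simp
  have dec: "(\<Sum>l\<in>{1..d}-S. \<mu> l) = (\<Sum>l\<in>{1..d}-{1..j}. \<mu> l) - sum \<mu> Y + sum \<mu> X"
    and cXY: "card X = card Y" using sum_decomp(1)[OF S jd, of \<mu>] sum_decomp(2)[OF S jd] unfolding X_def Y_def by auto
  have fX: "finite X" and fY: "finite Y" unfolding X_def Y_def by auto
  have sX: "sum \<mu> X = sum (\<lambda>l. \<mu> l - c) X + card X * c" by (simp add: sum_subtractf)
  have sY: "sum \<mu> Y = sum (\<lambda>l. \<mu> l - c) Y + card Y * c" by (simp add: sum_subtractf)
  have pX: "sum (\<lambda>l. \<mu> l - c) X \<le> 0" using H1 unfolding X_def by (intro sum_nonpos) auto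
  have pY: "sum (\<lambda>l. c - \<mu> l) Y \<le> 0" using H2 unfolding Y_def by (intro sum_nonpos) auto
  have nY: "sum (\<lambda>l. \<mu> l - c) Y = - sum (\<lambda>l. c - \<mu> l) Y" by (simp add: sum_negf[symmetric])
  show ?thesis
  proof (cases "{1..i'} \<subseteq> S \<and> S \<inter> {Suc k'..d} = {}")
    case True
    then show ?thesis using dec sX sY pX pY nY cXY by simp
  next
    case False
    then consider l where "l \<in> {1..i'}" "l \<notin> S" | l where "l \<in> S" "l \<in> {Suc k'..d}" by blast
    then show ?thesis
    proof cases
      case 1
      then have lX: "l \<in> X" unfolding X_def using ord by auto
      have "sum (\<lambda>l. \<mu> l - c) X \<le> \<mu> l - c"
        by (rule sum_le_one_term[OF fX _ lX]) (use H1 in \<open>auto simp: X_def\<close>)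
      moreover have "\<mu> l \<le> c - G" using H3 1 by auto
      ultimately show ?thesis using False dec sX sY pX pY nY cXY by simp
    next
      case 2
      then have lY: "l \<in> Y" unfolding Y_def using ord by auto
      have "sum (\<lambda>l. c - \<mu> l) Y \<le> c - \<mu> l"
        by (rule sum_le_one_term[OF fY _ lY]) (use H2 in \<open>auto simp: Y_def\<close>)
      moreover have "\<mu> l \<ge> c + G" using H4 2 by auto
      ultimately show ?thesis using False dec sX sY pX pY nY cXY by simp
    qed
  qed
qed

lemma card_good_le:
  assumes "k' \<le> d"
  shows "card {S\<in>{S\<in>Pow {1..d}. card S = j}. {1..i'} \<subseteq> S \<and> S \<inter> {Suc k'..d} = {}} \<le> 2^(k'-i')"
proof -
  have "{S\<in>{S\<in>Pow {1..d}. card S = j}. {1..i'} \<subseteq> S \<and> S \<inter> {Suc k'..d} = {}}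
        \<subseteq> (\<lambda>C. {1..i'} \<union> C) ` Pow {Suc i'..k'}"
  proof
    fix S assume S: "S \<in> {S\<in>{S\<in>Pow {1..d}. card S = j}. {1..i'} \<subseteq> S \<and> S \<inter> {Suc k'..d} = {}}"
    then have a: "S \<subseteq> {1..d}" "{1..i'} \<subseteq> S" "S \<inter> {Suc k'..d} = {}" by auto
    have "S = {1..i'} \<union> (S \<inter> {Suc i'..k'})"
    proof (intro equalityI subsetI)
      fix x assume x: "x \<in> S"
      then have "1 \<le> x" "x \<le> d" using a(1) by auto
      moreover have "\<not> (Suc k' \<le> x)" using a(3) x \<open>x \<le> d\<close> by auto
      ultimately show "x \<in> {1..i'} \<union> (S \<inter> {Suc i'..k'})" using x by auto
    qed (use a in auto)
    then show "S \<in> (\<lambda>C. {1..i'} \<union> C) ` Pow {Suc i'..k'}" by blast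
  qed
  then have "card {S\<in>{S\<in>Pow {1..d}. card S = j}. {1..i'} \<subseteq> S \<and> S \<inter> {Suc k'..d} = {}}
       \<le> card ((\<lambda>C. {1..i'} \<union> C) ` Pow {Suc i'..k'})"
    by (intro card_mono) auto
  also have "\<dots> \<le> card (Pow {Suc i'..k'})" by (rule card_image_le) auto
  also have "\<dots> = 2^(k'-i')" by (simp add: card_Pow)
  finally show ?thesis .
qed

lemma card_F_le: "card {S\<in>Pow {1..d}. card S = j} \<le> 2^d"
proof -
  have "card {S\<in>Pow {1..d}. card S = j} \<le> card (Pow {1..(d::nat)})" by (intro card_mono) auto
  then show ?thesis by (simp add: card_Pow)
qed

lemma upper_sum:
  fixes T :: "nat set \<Rightarrow> complex" and \<mu> :: "nat \<Rightarrow> real"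
  assumes T: "\<forall>S\<in>{S\<in>Pow {1..d}. card S = j}. norm (T S) = exp (\<Sum>l\<in>{1..d}-S. \<mu> l)"
    and ord: "i' \<le> j" "j \<le> k'" "k' \<le> d"
    and G: "G \<ge> 0"
    and H1: "\<forall>l\<in>{1..j}. \<mu> l \<le> c"
    and H2: "\<forall>l\<in>{Suc j..d}. \<mu> l \<ge> c"
    and H3: "\<forall>l\<in>{1..i'}. \<mu> l \<le> c - G"
    and H4: "\<forall>l\<in>{Suc k'..d}. \<mu> l \<ge> c + G"
  shows "norm (\<Sum>S\<in>{S\<in>Pow {1..d}. card S = j}. T S)
     \<le> exp (\<Sum>l\<in>{1..d}-{1..j}. \<mu> l) * (2^(k'-i') + 2^d * exp (- G))"
proof -
  define F where "F = {S\<in>Pow {1..d}. card S = j}"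
  define M where "M = exp (\<Sum>l\<in>{1..d}-{1..j}. \<mu> l)"
  define good where "good S \<longleftrightarrow> {1..i'} \<subseteq> S \<and> S \<inter> {Suc k'..d} = {}" for S
  have fF: "finite F" unfolding F_def by auto
  have Mpos: "M > 0" unfolding M_def by simp
  have each: "norm (T S) \<le> (if good S then M else 0) + M * exp (- G)" if "S \<in> F" for S
  proof -
    have SS: "S \<subseteq> {1..d}" "card S = j" using that unfolding F_def by auto
    have b: "(\<Sum>l\<in>{1..d}-S. \<mu> l) \<le> (\<Sum>l\<in>{1..d}-{1..j}. \<mu> l) - (if good S then 0 else G)"
      using block_bound[OF SS ord G H1 H2 H3 H4] unfolding good_def by simp
    have "norm (T S) \<le> exp ((\<Sum>l\<in>{1..d}-{1..j}. \<mu> l) - (if good S then 0 else G))"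
      using T that b unfolding F_def by simp
    also have "\<dots> = M * exp (- (if good S then 0 else G))"
      unfolding M_def by (simp add: exp_diff exp_minus field_simps)
    also have "\<dots> \<le> (if good S then M else 0) + M * exp (- G)"
      using Mpos by (cases "good S") auto
    finally show ?thesis .
  qed
  have "norm (\<Sum>S\<in>F. T S) \<le> (\<Sum>S\<in>F. norm (T S))" by (rule norm_sum)
  also have "\<dots> \<le> (\<Sum>S\<in>F. (if good S then M else 0) + M * exp (- G))"
    by (rule sum_mono) (use each in auto)
  also have "\<dots> = card {S\<in>F. good S} * M + card F * (M * exp (- G))"
    by (simp add: sum.distrib sum.inter_filter[symmetric] fF)
  also have "\<dots> \<le> 2^(k'-i') * M + 2^d * (M * exp (- G))"
  proof -
    have "card {S\<in>F. good S} \<le> (2::nat)^(k'-i')"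
      using card_good_le[OF ord(3), of j i'] unfolding F_def good_def by simp
    then have "real (card {S\<in>F. good S}) \<le> 2^(k'-i')" by (metis of_nat_le_iff of_nat_numeral of_nat_power)
    moreover have "real (card F) \<le> 2^d" using card_F_le[of d j] unfolding F_def
      by (metis of_nat_le_iff of_nat_numeral of_nat_power)
    ultimately show ?thesis using Mpos
      by (intro add_mono mult_right_mono) auto
  qed
  finally show ?thesis unfolding F_def M_def by (simp add: algebra_simps)
qed

lemma two_sided_sum:
  fixes T :: "nat set \<Rightarrow> complex" and \<mu> :: "nat \<Rightarrow> real"
  assumes T: "\<forall>S\<in>{S\<in>Pow {1..d}. card S = j}. norm (T S) = exp (\<Sum>l\<in>{1..d}-S. \<mu> l)"
    and jd: "j \<le> d"
    and G: "G \<ge> 0"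
    and H1: "\<forall>l\<in>{1..j}. \<mu> l \<le> c"
    and H2: "\<forall>l\<in>{Suc j..d}. \<mu> l \<ge> c"
    and H3: "\<forall>l\<in>{1..j}. \<mu> l \<le> c - G"
  shows "norm (\<Sum>S\<in>{S\<in>Pow {1..d}. card S = j}. T S) \<le> exp (\<Sum>l\<in>{1..d}-{1..j}. \<mu> l) * (1 + 2^d * exp (- G))"
    and "norm (\<Sum>S\<in>{S\<in>Pow {1..d}. card S = j}. T S) \<ge> exp (\<Sum>l\<in>{1..d}-{1..j}. \<mu> l) * (1 - 2^d * exp (- G))"
proof -
  define F where "F = {S\<in>Pow {1..d}. card S = j}"
  define M where "M = exp (\<Sum>l\<in>{1..d}-{1..j}. \<mu> l)"
  define B0 where "B0 = {1..j}"
  have fF: "finite F" unfolding F_def by auto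
  have Mpos: "M > 0" unfolding M_def by simp
  have B0F: "B0 \<in> F" unfolding F_def B0_def using jd by auto
  have H4: "\<forall>l\<in>{Suc d..d}. \<mu> l \<ge> c + G" by auto
  have each: "norm (T S) \<le> M * exp (- G)" if "S \<in> F - {B0}" for S
  proof -
    have SS: "S \<subseteq> {1..d}" "card S = j" using that unfolding F_def by auto
    have ng: "\<not> ({1..j} \<subseteq> S \<and> S \<inter> {Suc d..d} = {})"
    proof
      assume "{1..j} \<subseteq> S \<and> S \<inter> {Suc d..d} = {}"
      then have "S = {1..j}" using SS by (intro card_subset_eq[symmetric]) (auto intro: finite_subset)
      then show False using that B0_def by auto
    qed
    have b: "(\<Sum>l\<in>{1..d}-S. \<mu> l) \<le> (\<Sum>l\<in>{1..d}-{1..j}. \<mu> l) - G"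
      using block_bound[OF SS order.refl jd order.refl G H1 H2 H3 H4] ng by simp
    have "norm (T S) \<le> exp ((\<Sum>l\<in>{1..d}-{1..j}. \<mu> l) - G)"
      using T that b unfolding F_def by simp
    also have "\<dots> = M * exp (- G)"
      unfolding M_def by (simp add: exp_diff exp_minus field_simps)
    finally show ?thesis .
  qed
  have nB0: "norm (T B0) = M" using T B0F unfolding F_def M_def B0_def by auto
  have split: "(\<Sum>S\<in>F. T S) = T B0 + (\<Sum>S\<in>F-{B0}. T S)" using fF B0F by (simp add: sum.remove)
  have "norm (\<Sum>S\<in>F-{B0}. T S) \<le> (\<Sum>S\<in>F-{B0}. norm (T S))" by (rule norm_sum)
  also have "\<dots> \<le> (\<Sum>S\<in>F-{B0}. M * exp (- G))" by (rule sum_mono) (use each in auto)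
  also have "\<dots> = card (F-{B0}) * (M * exp (- G))" by simp
  also have "\<dots> \<le> 2^d * (M * exp (- G))"
  proof -
    have "card (F-{B0}) \<le> card F" using fF by (intro card_mono) auto
    also have "\<dots> \<le> 2^d" using card_F_le[of d j] unfolding F_def by simp
    finally have "real (card (F-{B0})) \<le> 2^d" by (metis of_nat_le_iff of_nat_numeral of_nat_power)
    then show ?thesis using Mpos by (intro mult_right_mono) auto
  qed
  finally have rest: "norm (\<Sum>S\<in>F-{B0}. T S) \<le> 2^d * (M * exp (- G))" .
  have "norm (\<Sum>S\<in>F. T S) \<le> norm (T B0) + norm (\<Sum>S\<in>F-{B0}. T S)"
    unfolding split by (rule norm_triangle_ineq)
  then show "norm (\<Sum>S\<in>{S\<in>Pow {1..d}. card S = j}. T S) \<le> exp (\<Sum>l\<in>{1..d}-{1..j}. \<mu> l) * (1 + 2^d * exp (- G))"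
    using rest nB0 unfolding F_def M_def by (simp add: algebra_simps)
  have "norm (T B0) - norm (\<Sum>S\<in>F-{B0}. T S) \<le> norm (\<Sum>S\<in>F. T S)"
    unfolding split by (metis norm_diff_ineq norm_minus_cancel diff_minus_eq_add)
  then show "norm (\<Sum>S\<in>{S\<in>Pow {1..d}. card S = j}. T S) \<ge> exp (\<Sum>l\<in>{1..d}-{1..j}. \<mu> l) * (1 - 2^d * exp (- G))"
    using rest nB0 unfolding F_def M_def by (simp add: algebra_simps)
qed

lemma div_le_helper:
  fixes p y A e :: real
  assumes "p \<ge> 1" "y \<le> p * A + e" "e \<ge> 0"
  shows "y / p \<le> A + e"
proof -
  have "e \<le> p * e" using mult_right_mono[of 1 p e] assms by simp
  then have "y \<le> p * (A + e)" using assms by (simp add: distrib_left)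
  then show ?thesis using assms by (simp add: pos_divide_le_eq mult.commute)
qed

lemma div_ge_helper:
  fixes p y A e :: real
  assumes "p \<ge> 1" "y \<ge> p * A - e" "e \<ge> 0"
  shows "y / p \<ge> A - e"
proof -
  have "e \<le> p * e" using mult_right_mono[of 1 p e] assms by simp
  then have "y \<ge> p * (A - e)" using assms by (simp add: right_diff_distrib)
  then show ?thesis using assms by (simp add: pos_le_divide_eq mult.commute)
qed

lemma part1_ereal:
  fixes xi xj Li Lj Lk \<alpha> \<beta> e1 e2 E :: real and rk :: ereal and p q :: real
  assumes ij: "p \<ge> 1" "q \<ge> 1"
    and bi: "xi \<ge> Li - e2" and bj: "xj \<le> Lj + e1"
    and bk: "rk = \<infinity> \<or> (\<exists>x. rk = ereal x \<and> x \<ge> Lk - e2)"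
    and L1: "Lj - Li = (p) * \<alpha>" and L2: "Lk - Lj = (q) * \<beta>"
    and e: "e1 \<ge> 0" "e2 \<ge> 0" and key: "\<alpha> + 2*(e1+e2) + E < \<beta>"
  shows "(ereal xj - ereal xi) / ereal (p) < (rk - ereal xj) / ereal (q) - ereal E"
proof -
  have p1: "p \<ge> 1" "q \<ge> 1" using ij by auto
  have p0: "p \<noteq> 0" "q \<noteq> 0" using ij by auto
  have lhs: "(ereal xj - ereal xi) / ereal (p) = ereal ((xj - xi) / (p))"
    using p0 by simp
  have A: "(xj - xi) / (p) \<le> \<alpha> + (e1 + e2)"
    by (rule div_le_helper[OF p1(1)]) (use bi bj L1 e in linarith)+
  show ?thesis
  proof (cases "rk = \<infinity>")
    case True
    then have "(rk - ereal xj) / ereal (q) = \<infinity>" using p1 by simp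
    then show ?thesis unfolding lhs by simp
  next
    case False
    then obtain x where x: "rk = ereal x" "x \<ge> Lk - e2" using bk by auto
    have B: "(x - xj) / (q) \<ge> \<beta> - (e1 + e2)"
      by (rule div_ge_helper[OF p1(2)]) (use x bj L2 e in linarith)+
    have "(rk - ereal xj) / ereal (q) - ereal E = ereal ((x - xj) / (q) - E)"
      using x p0 by simp
    then show ?thesis unfolding lhs using A B key by simp
  qed
qed

lemma part2_ereal:
  fixes xi xk Li Lj Lk \<alpha> e1 e2 E :: real and rj :: ereal and p q :: real
  assumes ij: "p \<ge> 1" "q \<ge> 1"
    and bi: "xi \<le> Li + e1" and bk: "xk \<le> Lk + e1"
    and bj: "rj = \<infinity> \<or> (\<exists>x. rj = ereal x \<and> x \<ge> Lj - e2)"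
    and L1: "Lj - Li = (p) * \<alpha>" and L2: "Lk - Lj = (q) * \<alpha>"
    and e: "e1 \<ge> 0" "e2 \<ge> 0" and key: "2*(e1+e2) < E"
  shows "(rj - ereal xi) / ereal (p) > (ereal xk - rj) / ereal (q) - ereal E"
proof -
  have p1: "p \<ge> 1" "q \<ge> 1" using ij by auto
  have p0: "p \<noteq> 0" "q \<noteq> 0" using ij by auto
  show ?thesis
  proof (cases "rj = \<infinity>")
    case True
    then show ?thesis using p1 by simp
  next
    case False
    then obtain x where x: "rj = ereal x" "x \<ge> Lj - e2" using bj by auto
    have A: "(x - xi) / (p) \<ge> \<alpha> - (e1 + e2)"
      by (rule div_ge_helper[OF p1(1)]) (use x bi L1 e in linarith)+
    have B: "(xk - x) / (q) \<le> \<alpha> + (e1 + e2)"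
      by (rule div_le_helper[OF p1(2)]) (use x bk L2 e in linarith)+
    have "(rj - ereal xi) / ereal p = ereal ((x - xi) / p)" using x p0 by simp
    moreover have "(ereal xk - rj) / ereal q - ereal E = ereal ((xk - x) / q - E)" using x p0 by simp
    ultimately show ?thesis using A B key by simp
  qed
qed

theorem mainTheorem5:
  fixes f :: "complex poly" and \<zeta> :: "nat \<Rightarrow> complex" and d N m i j k :: nat and E R :: real
  assumes deg: "degree f = d"
    and f0: "poly f 0 \<noteq> 0"
    and roots: "f = smult (lead_coeff f) (\<Prod>l\<in>{1..d}. [:- \<zeta> l, 1:])"
    and ordered: "\<And>l. 1 \<le> l \<Longrightarrow> l < d \<Longrightarrow> norm (\<zeta> l) \<le> norm (\<zeta> (Suc l))"
    and not_all_eq: "\<exists>a\<in>{1..d}. \<exists>b\<in>{1..d}. norm (\<zeta> a) \<noteq> norm (\<zeta> b)"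
  defines "\<rho> \<equiv> Min {norm (\<zeta> (Suc l)) / norm (\<zeta> l) | l. 1 \<le> l \<and> l < d \<and> norm (\<zeta> l) < norm (\<zeta> (Suc l))}"
    and "I \<equiv> {l. 1 \<le> l \<and> l \<le> d - 1 \<and> norm (\<zeta> l) < norm (\<zeta> (Suc l))} \<union> {0, d}"
  assumes R_def: "R = \<rho> ^ (2 ^ N)"
    and a: "\<And>i1 i2. successive I i1 i2 \<Longrightarrow> real m \<ge> real i2 - real i1"
    and b0: "2 ^ d / R < 1"
    and b1: "(2 / 2 ^ N) * ln (2 ^ m + 2 ^ d / R) - (4 / 2 ^ N) * ln (1 - 2 ^ d / R) < E"
    and b2: "E < ln \<rho> / 2"
    and c: "i < j" "j < k" "k \<le> d"
  shows "(successive I i j \<and> (\<forall>x\<in>I. \<not> (j < x \<and> x < k)) \<longrightarrow>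
            graeffe_S f N i j < graeffe_S f N j k - ereal E)
       \<and> (successive I i k \<longrightarrow> graeffe_S f N i j > graeffe_S f N j k - ereal E)"
proof -
  define lc where "lc = lead_coeff f"
  have froots: "f = smult lc (\<Prod>l\<in>{1..d}. [:- \<zeta> l, 1:])" using roots lc_def by simp
  have lc0: "lc \<noteq> 0"
  proof
    assume "lc = 0" then have "f = 0" using froots by simp
    then show False using f0 by simp
  qed
  have poly0: "poly f 0 = lc * (\<Prod>l\<in>{1..d}. - \<zeta> l)"
    by (subst froots) (simp add: poly_prod)
  have z0: "\<zeta> l \<noteq> 0" if "l \<in> {1..d}" for l
    using f0 poly0 that by auto
  define a where "a l = norm (\<zeta> l)" for l
  have apos: "a l > 0" if "l \<in> {1..d}" for l using z0[OF that] unfolding a_def by simp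
  have amono: "a p \<le> a q" if "1 \<le> p" "p \<le> q" "q \<le> d" for p q
    using that(2) 
  proof (induction q rule: dec_induct)
    case base then show ?case by simp
  next
    case (step n)
    have "a n \<le> a (Suc n)" unfolding a_def using ordered[of n] that step by simp
    then show ?case using step by simp
  qed
  have d1: "d \<ge> 1" using not_all_eq by auto
  have strict_ex: "\<exists>l. 1 \<le> l \<and> l < d \<and> a l < a (Suc l)"
  proof (rule ccontr)
    assume ne: "\<not> ?thesis"
    have eq: "a p = a q" if "1 \<le> p" "p \<le> q" "q \<le> d" for p q
      using that(2)
    proof (induction q rule: dec_induct)
      case base then show ?case by simp
    next
      case (step n)
      have "a n \<le> a (Suc n)" unfolding a_def using ordered[of n] that step by simp
      moreover have "1 \<le> n" "n < d" using that step by auto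
      then have "\<not> a n < a (Suc n)" using ne by blast
      ultimately have "a n = a (Suc n)" by simp
      then show ?case using step by simp
    qed
    obtain p q where pq: "p \<in> {1..d}" "q \<in> {1..d}" "a p \<noteq> a q" using not_all_eq unfolding a_def by auto
    show False
    proof (cases "p \<le> q")
      case True then show False using eq[of p q] pq by auto
    next
      case False then show False using eq[of q p] pq by auto
    qed
  qed
  define Rs where "Rs = {norm (\<zeta> (Suc l)) / norm (\<zeta> l) | l. 1 \<le> l \<and> l < d \<and> norm (\<zeta> l) < norm (\<zeta> (Suc l))}"
  have Rs_fin: "finite Rs" unfolding Rs_def by (rule finite_image_set) auto
  have Rs_ne: "Rs \<noteq> {}" using strict_ex unfolding Rs_def a_def by blast
  have rho_Rs: "\<rho> = Min Rs" unfolding \<rho>_def Rs_def by simp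
  have rho_le: "\<rho> \<le> a (Suc l) / a l" if "1 \<le> l" "l < d" "a l < a (Suc l)" for l
    unfolding rho_Rs using that Rs_fin by (intro Min_le) (auto simp: Rs_def a_def)
  have rho_gt1: "\<rho> > 1"
  proof -
    have "\<rho> \<in> Rs" unfolding rho_Rs using Rs_fin Rs_ne by (rule Min_in)
    then obtain l where l: "1 \<le> l" "l < d" "a l < a (Suc l)" "\<rho> = a (Suc l) / a l"
      unfolding Rs_def a_def by auto
    have "a l > 0" using apos l by auto
    then show ?thesis using l by simp
  qed
  have gap: "ln \<rho> \<le> ln (a (Suc l)) - ln (a l)" if "1 \<le> l" "l < d" "a l < a (Suc l)" for l
  proof -
    have p: "a l > 0" "a (Suc l) > 0" using apos that by auto
    have "ln \<rho> \<le> ln (a (Suc l) / a l)" using rho_le[OF that] rho_gt1 by simp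
    then show ?thesis using p by (simp add: ln_div)
  qed
  have I_strict: "a t < a (Suc t)" if "t \<in> I" "1 \<le> t" "t < d" for t
    using that unfolding I_def a_def by auto
  have I_le: "t \<le> d" if "t \<in> I" for t using that d1 unfolding I_def by auto
  have I0: "0 \<in> I" and Id: "d \<in> I" unfolding I_def by auto
  have block: "a l = a k'" if "successive I i' k'" "i' < l" "l \<le> k'" for i' k' l
    using that(3)
  proof (induction l rule: inc_induct)
    case base then show ?case by simp
  next
    case (step n)
    have nI: "n \<notin> I" using that(1) that(2) step unfolding successive_def by auto
    have k'd: "k' \<le> d" using that(1) I_le unfolding successive_def by auto
    have "1 \<le> n" "n < d" using that(2) step k'd by auto
    then have "\<not> a n < a (Suc n)" using nI unfolding I_def a_def by auto
    moreover have "a n \<le> a (Suc n)" using amono[of n "Suc n"] \<open>1 \<le> n\<close> \<open>n < d\<close> by simp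
    ultimately show ?case using step by simp
  qed
  have R_gt1: "R > 1" unfolding R_def using rho_gt1 by simp
  define G where "G = 2^N * ln \<rho>"
  have G0: "G \<ge> 0" unfolding G_def using rho_gt1 by simp
  have expG: "exp (- G) = 1 / R"
  proof -
    have "exp G = exp (ln (\<rho>^(2^N)))" unfolding G_def using rho_gt1 by (simp add: ln_realpow)
    also have "\<dots> = R" unfolding R_def using rho_gt1 by simp
    finally have "exp G = R" .
    then show ?thesis by (simp add: exp_minus inverse_eq_divide)
  qed
  define \<mu> where "\<mu> l = 2^N * ln (a l)" for l
  have mu_mono: "\<mu> p \<le> \<mu> q" if "1 \<le> p" "p \<le> q" "q \<le> d" for p q
    using amono[OF that] apos that unfolding \<mu>_def by simp
  have mu_gap: "\<mu> (Suc t) \<ge> \<mu> t + G" if "t \<in> I" "1 \<le> t" "t < d" for t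
  proof -
    have "ln \<rho> \<le> ln (a (Suc t)) - ln (a t)" using gap I_strict that by auto
    then have "2^N * ln \<rho> \<le> 2^N * (ln (a (Suc t)) - ln (a t))" by simp
    then show ?thesis unfolding \<mu>_def G_def by (simp add: algebra_simps)
  qed
  define w where "w l = \<zeta> l ^ (2^N)" for l
  have wnorm: "norm (w l) = exp (\<mu> l)" if "l \<in> {1..d}" for l
  proof -
    have "exp (\<mu> l) = exp (ln (a l ^ (2^N)))" unfolding \<mu>_def using apos[OF that]
      by (simp add: ln_realpow)
    also have "\<dots> = a l ^ (2^N)" using apos[OF that] by simp
    finally show ?thesis unfolding w_def a_def by (simp add: norm_power)
  qed
  define F where "F t = {S\<in>Pow {1..d}. card S = t}" for t :: nat
  define T where "T S = (\<Prod>l\<in>{1..d}-S. - w l)" for S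
  define s where "s t = (\<Sum>S\<in>F t. T S)" for t
  have Tnorm: "\<forall>S\<in>F t. norm (T S) = exp (\<Sum>l\<in>{1..d}-S. \<mu> l)" for t
  proof
    fix S assume "S \<in> F t"
    have "norm (T S) = (\<Prod>l\<in>{1..d}-S. norm (w l))" unfolding T_def by (simp add: prod_norm[symmetric])
    also have "\<dots> = (\<Prod>l\<in>{1..d}-S. exp (\<mu> l))" by (intro prod.cong refl) (simp add: wnorm)
    also have "\<dots> = exp (\<Sum>l\<in>{1..d}-S. \<mu> l)" by (simp add: exp_sum)
    finally show "norm (T S) = exp (\<Sum>l\<in>{1..d}-S. \<mu> l)" .
  qed
  have coeffs: "coeff ((graeffe ^^ N) f) t = lc^(2^N) * s t" for t
  proof -
    have "(graeffe ^^ N) f = smult (lc^(2^N)) (\<Prod>l\<in>{1..d}. [:- ((\<zeta> l)^(2^N)), 1:])"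
      by (rule graeffe_iter[OF lc0 froots])
    then show ?thesis unfolding s_def T_def F_def w_def by (simp add: coeff_prod_linear)
  qed
  define Ms where "Ms t = (\<Sum>l\<in>{1..d}-{1..t}. \<mu> l)" for t
  define L where "L t = - ln (norm lc) - Ms t / 2^N" for t
  define \<delta> where "\<delta> = 2^d / R"
  have delta: "\<delta> > 0" "\<delta> < 1" "\<delta> = 2^d * exp (- G)" unfolding \<delta>_def using b0 R_gt1 expG by auto
  define e1 where "e1 = - ln (1 - \<delta>) / 2^N"
  define e2 where "e2 = ln (2^m + \<delta>) / 2^N"
  have e1pos: "e1 \<ge> 0"
  proof -
    have "ln (1 - \<delta>) \<le> 0" using delta(1,2) by simp
    then show ?thesis unfolding e1_def by (simp add: divide_nonpos_pos)
  qed
  have e2pos: "e2 \<ge> 0"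
  proof -
    have "(1::real) \<le> 2^m" by (simp add: one_le_power)
    then have "1 \<le> 2^m + \<delta>" using delta(1) by linarith
    then have "ln (2^m + \<delta>) \<ge> 0" by (rule ln_ge_zero)
    then show ?thesis unfolding e2_def by simp
  qed
  have rform: "graeffe_r f N t = (if s t = 0 then \<infinity> else ereal (- ln (norm lc) - ln (norm (s t)) / 2^N))" for t
  proof (cases "s t = 0")
    case True then show ?thesis unfolding graeffe_r_def coeffs by simp
  next
    case False
    have "ln (norm (lc^(2^N) * s t)) = 2^N * ln (norm lc) + ln (norm (s t))"
      using False lc0 by (simp add: norm_mult norm_power ln_mult ln_realpow)
    then have "- ln (norm (lc^(2^N) * s t)) / 2^N = - ln (norm lc) - ln (norm (s t)) / 2^N"
      by (simp add: field_simps)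
    then show ?thesis unfolding graeffe_r_def coeffs using False lc0 by simp
  qed
  have lnmono: "ln x \<le> ln y" if "0 < x" "x \<le> y" for x y :: real
    using that by (subst ln_le_cancel_iff) auto
  have lnexp: "ln (exp y * z) = y + ln z" if "z > 0" for y z :: real
    using that by (simp add: ln_mult)
  have UP: "graeffe_r f N t = \<infinity> \<or> (\<exists>x. graeffe_r f N t = ereal x \<and> x \<ge> L t - e2)"
    if su: "successive I i' k'" and t: "i' \<le> t" "t \<le> k'" for i' k' t
  proof -
    have ik: "i' < k'" "i' \<in> I" "k' \<in> I" using su unfolding successive_def by auto
    have k'd: "k' \<le> d" using I_le ik by auto
    have H1: "\<forall>l\<in>{1..t}. \<mu> l \<le> \<mu> k'"
    proof
      fix l assume l: "l \<in> {1..t}"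
      show "\<mu> l \<le> \<mu> k'" by (rule mu_mono) (use l t k'd in auto)
    qed
    have H2: "\<forall>l\<in>{Suc t..d}. \<mu> l \<ge> \<mu> k'"
    proof
      fix l assume l: "l \<in> {Suc t..d}"
      show "\<mu> l \<ge> \<mu> k'"
      proof (cases "l \<le> k'")
        case True
        moreover have "i' < l" using l t by simp
        ultimately have "a l = a k'" using block[OF su] by blast
        then show ?thesis unfolding \<mu>_def by simp
      next
        case False then show ?thesis by (intro mu_mono) (use l ik in auto)
      qed
    qed
    have H3: "\<forall>l\<in>{1..i'}. \<mu> l \<le> \<mu> k' - G"
    proof
      fix l assume l: "l \<in> {1..i'}"
      then have i1: "1 \<le> i'" "i' < d" using ik k'd by auto
      have "\<mu> (Suc i') \<ge> \<mu> i' + G" by (rule mu_gap) (use ik i1 in auto)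
      moreover have "a (Suc i') = a k'" using block[OF su, of "Suc i'"] ik by simp
      then have "\<mu> (Suc i') = \<mu> k'" unfolding \<mu>_def by simp
      moreover have "\<mu> l \<le> \<mu> i'" by (rule mu_mono) (use l i1 in auto)
      ultimately show "\<mu> l \<le> \<mu> k' - G" by linarith
    qed
    have H4: "\<forall>l\<in>{Suc k'..d}. \<mu> l \<ge> \<mu> k' + G"
    proof
      fix l assume l: "l \<in> {Suc k'..d}"
      then have k1: "1 \<le> k'" "k' < d" using ik by auto
      have "\<mu> (Suc k') \<ge> \<mu> k' + G" by (rule mu_gap) (use ik k1 in auto)
      moreover have "\<mu> l \<ge> \<mu> (Suc k')" by (rule mu_mono) (use l in auto)
      ultimately show "\<mu> l \<ge> \<mu> k' + G" by simp
    qed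
    have ub: "norm (s t) \<le> exp (Ms t) * (2^(k'-i') + 2^d * exp (- G))"
      unfolding s_def F_def Ms_def
      by (rule upper_sum[OF Tnorm[of t, unfolded F_def] t k'd G0 H1 H2 H3 H4])
    have "real m \<ge> real k' - real i'" using a[OF su] .
    then have "k' - i' \<le> m" by linarith
    then have "(2::real)^(k'-i') \<le> 2^m" by (rule power_increasing) simp
    then have ub2: "norm (s t) \<le> exp (Ms t) * (2^m + \<delta>)"
    proof -
      have "2^(k'-i') + 2^d * exp (- G) \<le> 2^m + \<delta>" using \<open>(2::real)^(k'-i') \<le> 2^m\<close> delta(3) by simp
      then have "exp (Ms t) * (2^(k'-i') + 2^d * exp (- G)) \<le> exp (Ms t) * (2^m + \<delta>)"
        by (intro mult_left_mono) auto
      then show ?thesis using ub by linarith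
    qed
    show ?thesis
    proof (cases "s t = 0")
      case True then show ?thesis by (simp add: rform)
    next
      case False
      have "ln (norm (s t)) \<le> ln (exp (Ms t) * (2^m + \<delta>))"
        using ub2 False by (intro lnmono) auto
      also have "\<dots> = Ms t + ln (2^m + \<delta>)" using delta(1) by (simp add: lnexp add_pos_pos)
      finally have "ln (norm (s t)) / 2^N \<le> (Ms t + ln (2^m + \<delta>)) / 2^N"
        by (simp add: divide_right_mono)
      then have "- ln (norm lc) - ln (norm (s t)) / 2^N \<ge> L t - e2"
        unfolding L_def e2_def by (simp add: add_divide_distrib)
      then show ?thesis using False by (simp add: rform)
    qed
  qed
  have TWO: "\<exists>x. graeffe_r f N t = ereal x \<and> L t - e2 \<le> x \<and> x \<le> L t + e1" if tI: "t \<in> I" for t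
  proof -
    define c where "c = (if t = 0 then \<mu> 1 else \<mu> t + G)"
    have td: "t \<le> d" using I_le tI by auto
    have H1: "\<forall>l\<in>{1..t}. \<mu> l \<le> c"
    proof
      fix l assume l: "l \<in> {1..t}"
      have "\<mu> l \<le> \<mu> t" by (rule mu_mono) (use l td in auto)
      then show "\<mu> l \<le> c" using l G0 unfolding c_def by auto
    qed
    have H2: "\<forall>l\<in>{Suc t..d}. \<mu> l \<ge> c"
    proof
      fix l assume l: "l \<in> {Suc t..d}"
      show "\<mu> l \<ge> c"
      proof (cases "t = 0")
        case True
        have "\<mu> 1 \<le> \<mu> l" by (rule mu_mono) (use l in auto)
        then show ?thesis unfolding c_def using True by simp
      next
        case False
        then have "\<mu> (Suc t) \<ge> \<mu> t + G" using l by (intro mu_gap tI) auto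
        moreover have "\<mu> l \<ge> \<mu> (Suc t)" by (rule mu_mono) (use l in auto)
        ultimately show ?thesis unfolding c_def using False by simp
      qed
    qed
    have H3: "\<forall>l\<in>{1..t}. \<mu> l \<le> c - G"
    proof
      fix l assume l: "l \<in> {1..t}"
      have "\<mu> l \<le> \<mu> t" by (rule mu_mono) (use l td in auto)
      then show "\<mu> l \<le> c - G" using l unfolding c_def by auto
    qed
    have ub: "norm (s t) \<le> exp (Ms t) * (1 + \<delta>)" and lb: "norm (s t) \<ge> exp (Ms t) * (1 - \<delta>)"
      unfolding s_def F_def Ms_def delta(3)
      by (rule two_sided_sum[OF Tnorm[of t, unfolded F_def] td G0 H1 H2 H3])+
    have pos: "exp (Ms t) * (1 - \<delta>) > 0" using delta by simp
    then have s0: "s t \<noteq> 0" using lb by auto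
    have "ln (norm (s t)) \<le> ln (exp (Ms t) * (1 + \<delta>))" using ub s0 by (intro lnmono) auto
    also have "\<dots> = Ms t + ln (1 + \<delta>)" using delta(1) by (simp add: lnexp)
    also have "\<dots> \<le> Ms t + ln (2^m + \<delta>)"
    proof -
      have "(1::real) \<le> 2^m" by (simp add: one_le_power)
      then have "1 + \<delta> \<le> 2^m + \<delta>" by linarith
      then have "ln (1 + \<delta>) \<le> ln (2^m + \<delta>)" using delta(1) by (intro lnmono) auto
      then show ?thesis by simp
    qed
    finally have u: "ln (norm (s t)) / 2^N \<le> (Ms t + ln (2^m + \<delta>)) / 2^N"
      by (simp add: divide_right_mono)
    have "ln (norm (s t)) \<ge> ln (exp (Ms t) * (1 - \<delta>))" using lb pos by (intro lnmono) auto
    also have "ln (exp (Ms t) * (1 - \<delta>)) = Ms t + ln (1 - \<delta>)" using delta(2) by (simp add: lnexp)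
    finally have l: "ln (norm (s t)) / 2^N \<ge> (Ms t + ln (1 - \<delta>)) / 2^N"
      by (simp add: divide_right_mono)
    have "- ln (norm lc) - ln (norm (s t)) / 2^N \<ge> L t - e2"
      using u unfolding L_def e2_def by (simp add: add_divide_distrib)
    moreover have "- ln (norm lc) - ln (norm (s t)) / 2^N \<le> L t + e1"
      using l unfolding L_def e1_def by (simp add: add_divide_distrib)
    ultimately show ?thesis using s0 by (simp add: rform)
  qed
  have Lblock: "L t2 - L t1 = (real t2 - real t1) * ln A"
    if "t1 \<le> t2" "t2 \<le> d" "\<forall>l\<in>{Suc t1..t2}. a l = A" for t1 t2 A
  proof -
    have U: "{1..d}-{1..t1} = ({1..d}-{1..t2}) \<union> {Suc t1..t2}" using that by auto
    have "Ms t1 = Ms t2 + (\<Sum>l\<in>{Suc t1..t2}. \<mu> l)"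
      unfolding Ms_def U by (rule sum.union_disjoint) auto
    also have "(\<Sum>l\<in>{Suc t1..t2}. \<mu> l) = (\<Sum>l\<in>{Suc t1..t2}. 2^N * ln A)"
      by (intro sum.cong refl) (use that in \<open>simp add: \<mu>_def\<close>)
    also have "\<dots> = (real t2 - real t1) * (2^N * ln A)" using that by (simp add: of_nat_diff)
    finally have "Ms t1 - Ms t2 = (real t2 - real t1) * (2^N * ln A)" by simp
    moreover have "L t2 - L t1 = (Ms t1 - Ms t2) / 2^N" unfolding L_def by (simp add: diff_divide_distrib)
    ultimately show ?thesis by simp
  qed
  have b1': "2 * e2 + 4 * e1 < E"
    using b1 unfolding e1_def e2_def \<delta>_def by (simp add: field_simps)
  have finI: "finite I" using I_le by (intro finite_subset[of I "{0..d}"]) auto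
  have P1: "successive I i j \<and> (\<forall>x\<in>I. \<not> (j < x \<and> x < k)) \<longrightarrow>
            graeffe_S f N i j < graeffe_S f N j k - ereal E"
  proof
    assume H: "successive I i j \<and> (\<forall>x\<in>I. \<not> (j < x \<and> x < k))"
    then have su: "successive I i j" and nb: "\<forall>x\<in>I. \<not> (j < x \<and> x < k)" by auto
    have iI: "i \<in> I" and jI: "j \<in> I" using su unfolding successive_def by auto
    define K where "K = {x\<in>I. k \<le> x}"
    define k' where "k' = Min K"
    have finK: "finite K" unfolding K_def using finI by simp
    have dK: "d \<in> K" unfolding K_def using Id c by simp
    have k'K: "k' \<in> K" unfolding k'_def using finK dK by (intro Min_in) auto
    have kk': "k' \<in> I" "k \<le> k'" using k'K unfolding K_def by auto
    have su2: "successive I j k'"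
      unfolding successive_def
    proof (intro conjI ballI)
      show "j \<in> I" "k' \<in> I" "j < k'" using jI kk' c by auto
      fix x assume xI: "x \<in> I"
      show "\<not> (j < x \<and> x < k')"
      proof
        assume jx: "j < x \<and> x < k'"
        show False
        proof (cases "x < k")
          case True then show False using nb xI jx by auto
        next
          case False
          then have "x \<in> K" unfolding K_def using xI by auto
          then have "k' \<le> x" unfolding k'_def using finK by (intro Min_le) auto
          then show False using jx by simp
        qed
      qed
    qed
    obtain xi where xi: "graeffe_r f N i = ereal xi" "L i - e2 \<le> xi" using TWO[OF iI] by auto
    obtain xj where xj: "graeffe_r f N j = ereal xj" "xj \<le> L j + e1" using TWO[OF jI] by auto
    have rk: "graeffe_r f N k = \<infinity> \<or> (\<exists>x. graeffe_r f N k = ereal x \<and> x \<ge> L k - e2)"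
      by (rule UP[OF su2]) (use c kk' in auto)
    have L1: "L j - L i = (real j - real i) * ln (a j)"
    proof (rule Lblock)
      show "i \<le> j" "j \<le> d" using c by auto
      show "\<forall>l\<in>{Suc i..j}. a l = a j"
      proof
        fix l assume l: "l \<in> {Suc i..j}"
        then show "a l = a j" by (intro block[OF su]) auto
      qed
    qed
    have L2: "L k - L j = (real k - real j) * ln (a (Suc j))"
    proof (rule Lblock)
      show "j \<le> k" "k \<le> d" using c by auto
      have e: "a (Suc j) = a k'" using block[OF su2, of "Suc j"] c kk' by simp
      show "\<forall>l\<in>{Suc j..k}. a l = a (Suc j)"
      proof
        fix l assume l: "l \<in> {Suc j..k}"
        have "a l = a k'" by (intro block[OF su2]) (use l kk' in auto)
        then show "a l = a (Suc j)" using e by simp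
      qed
    qed
    have j1: "1 \<le> j" "j < d" using c by auto
    have "ln \<rho> \<le> ln (a (Suc j)) - ln (a j)" using gap[OF j1 I_strict[OF jI j1]] .
    moreover have "2 * (e1 + e2) < E" using b1' e1pos by (simp add: algebra_simps)
    moreover have "2 * E < ln \<rho>" using b2 by linarith
    ultimately have key: "ln (a j) + 2 * (e1 + e2) + E < ln (a (Suc j))"
      by linarith
    have "(ereal xj - ereal xi) / ereal (real j - real i)
          < (graeffe_r f N k - ereal xj) / ereal (real k - real j) - ereal E"
      by (rule part1_ereal[OF _ _ xi(2) xj(2) rk L1 L2 e1pos e2pos key]) (use c in auto)
    then show "graeffe_S f N i j < graeffe_S f N j k - ereal E"
      unfolding graeffe_S_def xi(1) xj(1) .
  qed
  have P2: "successive I i k \<longrightarrow> graeffe_S f N i j > graeffe_S f N j k - ereal E"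
  proof
    assume su: "successive I i k"
    have iI: "i \<in> I" and kI: "k \<in> I" using su unfolding successive_def by auto
    obtain xi where xi: "graeffe_r f N i = ereal xi" "xi \<le> L i + e1" using TWO[OF iI] by auto
    obtain xk where xk: "graeffe_r f N k = ereal xk" "xk \<le> L k + e1" using TWO[OF kI] by auto
    have rj: "graeffe_r f N j = \<infinity> \<or> (\<exists>x. graeffe_r f N j = ereal x \<and> x \<ge> L j - e2)"
      by (rule UP[OF su]) (use c in auto)
    have L1: "L j - L i = (real j - real i) * ln (a k)"
    proof (rule Lblock)
      show "i \<le> j" "j \<le> d" using c by auto
      show "\<forall>l\<in>{Suc i..j}. a l = a k"
      proof
        fix l assume l: "l \<in> {Suc i..j}"
        then show "a l = a k" by (intro block[OF su]) (use c in auto)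
      qed
    qed
    have L2: "L k - L j = (real k - real j) * ln (a k)"
    proof (rule Lblock)
      show "j \<le> k" "k \<le> d" using c by auto
      show "\<forall>l\<in>{Suc j..k}. a l = a k"
      proof
        fix l assume l: "l \<in> {Suc j..k}"
        then show "a l = a k" by (intro block[OF su]) (use c in auto)
      qed
    qed
    have key: "2 * (e1 + e2) < E" using b1' e1pos by (simp add: algebra_simps)
    have "(graeffe_r f N j - ereal xi) / ereal (real j - real i)
          > (ereal xk - graeffe_r f N j) / ereal (real k - real j) - ereal E"
      by (rule part2_ereal[OF _ _ xi(2) xk(2) rj L1 L2 e1pos e2pos key]) (use c in auto)
    then show "graeffe_S f N i j > graeffe_S f N j k - ereal E"
      unfolding graeffe_S_def xi(1) xk(1) .
  qed
  show ?thesis using P1 P2 by blast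
qed

end
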